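(* Let $G$ be a finite graph with $d \geq 2$ vertices satisfying: (1) $G$ is connected; (2) $G$ is simple; (3) $G$ is strictly subtrivalent; (4) the shortest path between any two distinct vertices of degree $3$ contains at least $3$ edges; (5) $G$ contains no triangle. Let $g = m - d + 1$, where $m$ is the number of edges of $G$. Then $d \geq 2g+2$.
   Context: A graph is strictly subtrivalent if every vertex has degree at most $3$ and at least one vertex has degree less than $3$. The quantity $g = m-d+1 = h^1(G,k)$ (the first Betti number of $G$ viewed as a $1$-dimensional simplicial complex) is called the genus of $G$; it is not the graph-theoretic genus. *)

theory Defs
  imports Main
begin

text \<open>A finite graph with vertex set V and edge set E; simplicity (no loops, no multiple
edges) is built in by representing every edge as a two-element subset of V.\<close>

definition simple_graph :: "'a set \<Rightarrow> 'a set set \<Rightarrow> bool" where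
  "simple_graph V E \<longleftrightarrow> finite V \<and>
     (\<forall>e\<in>E. \<exists>u v. u \<noteq> v \<and> u \<in> V \<and> v \<in> V \<and> e = {u, v})"

definition degree :: "'a set set \<Rightarrow> 'a \<Rightarrow> nat" where
  "degree E v = card {e \<in> E. v \<in> e}"

text \<open>A walk is a nonempty list of vertices, consecutive ones joined by an edge;
its length (number of edges) is length xs - 1.\<close>
definition is_walk :: "'a set set \<Rightarrow> 'a list \<Rightarrow> bool" where
  "is_walk E xs \<longleftrightarrow> xs \<noteq> [] \<and> (\<forall>i. Suc i < length xs \<longrightarrow> {xs ! i, xs ! Suc i} \<in> E)"

definition connected_graph :: "'a set \<Rightarrow> 'a set set \<Rightarrow> bool" where
  "connected_graph V E \<longleftrightarrow>
     (\<forall>u\<in>V. \<forall>v\<in>V. \<exists>xs. is_walk E xs \<and> hd xs = u \<and> last xs = v)"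

definition strictly_subtrivalent :: "'a set \<Rightarrow> 'a set set \<Rightarrow> bool" where
  "strictly_subtrivalent V E \<longleftrightarrow>
     (\<forall>v\<in>V. degree E v \<le> 3) \<and> (\<exists>v\<in>V. degree E v < 3)"

text \<open>Every walk (hence the shortest path) between two distinct vertices of degree 3
has at least 3 edges.\<close>
definition trivalent_vertices_far :: "'a set \<Rightarrow> 'a set set \<Rightarrow> bool" where
  "trivalent_vertices_far V E \<longleftrightarrow>
     (\<forall>u\<in>V. \<forall>v\<in>V. u \<noteq> v \<and> degree E u = 3 \<and> degree E v = 3 \<longrightarrow>
        (\<forall>xs. is_walk E xs \<and> hd xs = u \<and> last xs = v \<longrightarrow> length xs - 1 \<ge> 3))"

definition triangle_free :: "'a set \<Rightarrow> 'a set set \<Rightarrow> bool" where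
  "triangle_free V E \<longleftrightarrow>
     \<not> (\<exists>a\<in>V. \<exists>b\<in>V. \<exists>c\<in>V. a \<noteq> b \<and> b \<noteq> c \<and> a \<noteq> c \<and>
           {a, b} \<in> E \<and> {b, c} \<in> E \<and> {a, c} \<in> E)"

definition graph_genus :: "'a set \<Rightarrow> 'a set set \<Rightarrow> int" where
  "graph_genus V E = int (card E) - int (card V) + 1"

end

theory Submission
  imports Defs
begin

lemma edge_other:
  assumes "simple_graph V E" "e \<in> E" "v \<in> e"
  shows "\<exists>a. a \<noteq> v \<and> a \<in> V \<and> v \<in> V \<and> e = {v, a}"
proof -
  obtain u w where uw: "u \<noteq> w" "u \<in> V" "w \<in> V" "e = {u,w}"
    using assms unfolding simple_graph_def by blast
  show ?thesis
  proof (cases "v = u")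
    case True then show ?thesis using uw by (intro exI[of _ w]) auto
  next
    case False then have "v = w" using uw assms(3) by blast
    then show ?thesis using uw by (intro exI[of _ u]) auto
  qed
qed

lemma finE: assumes "simple_graph V E" shows "finite E"
proof -
  have "E \<subseteq> Pow V"
  proof
    fix e assume "e \<in> E"
    then obtain u w where uw: "u \<noteq> w" "u \<in> V" "w \<in> V" "e = {u,w}"
      using assms unfolding simple_graph_def by blast
    then show "e \<in> Pow V" by auto
  qed
  moreover have "finite V" using assms unfolding simple_graph_def by blast
  ultimately show ?thesis by (meson finite_Pow_iff finite_subset)
qed

lemma handshake:
  assumes "simple_graph V E" "finite E"
  shows "(\<Sum>v\<in>V. degree E v) = 2 * card E"
proof -
  have fV: "finite V" using assms unfolding simple_graph_def by blast
  have fE: "finite E" by fact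
  have d: "degree E v = (\<Sum>e\<in>E. if v \<in> e then 1 else 0)" for v
    unfolding degree_def card_eq_sum using sum.inter_filter[OF fE, of "\<lambda>_. 1::nat"] by simp
  have "(\<Sum>v\<in>V. degree E v) = (\<Sum>v\<in>V. \<Sum>e\<in>E. if v \<in> e then 1 else (0::nat))"
    by (simp only: d)
  also have "\<dots> = (\<Sum>e\<in>E. \<Sum>v\<in>V. if v \<in> e then 1 else 0)" by (rule sum.swap)
  also have "\<dots> = (\<Sum>e\<in>E. (2::nat))"
  proof (rule sum.cong[OF refl])
    fix e assume "e \<in> E"
    then obtain u w where uw: "u \<noteq> w" "u \<in> V" "w \<in> V" "e = {u,w}"
      using assms unfolding simple_graph_def by blast
    then have s: "{v\<in>V. v \<in> e} = {u,w}" by auto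
    have "(\<Sum>v\<in>V. if v \<in> e then 1 else (0::nat)) = card {v\<in>V. v \<in> e}"
      unfolding card_eq_sum using sum.inter_filter[OF fV, of "\<lambda>_. 1::nat"] by simp
    then show "(\<Sum>v\<in>V. if v \<in> e then 1 else 0) = (2::nat)"
      using s uw by simp
  qed
  finally show ?thesis by simp
qed

theorem lemma1p2:
  fixes V :: "'a set" and E :: "'a set set"
  assumes "simple_graph V E"
    and "card V \<ge> 2"
    and "connected_graph V E"
    and "strictly_subtrivalent V E"
    and "trivalent_vertices_far V E"
    and "triangle_free V E"
  shows "int (card V) \<ge> 2 * graph_genus V E + 2"
proof -
  note sg = assms(1)
  have fV: "finite V" using sg unfolding simple_graph_def by blast
  have fE: "finite E" using finE[OF sg] .
  have le3: "\<And>v. v \<in> V \<Longrightarrow> degree E v \<le> 3" using assms(4) unfolding strictly_subtrivalent_def by blast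
  define f where "f v = 3 - int (degree E v)" for v
  have fnn: "\<And>v. v \<in> V \<Longrightarrow> f v \<ge> 0" using le3 unfolding f_def by force
  have hs: "(\<Sum>v\<in>V. int (degree E v)) = 2 * int (card E)"
    using handshake[OF sg fE] by (metis of_nat_mult of_nat_numeral of_nat_sum)
  have sumf: "(\<Sum>v\<in>V. f v) = 3 * int (card V) - 2 * int (card E)"
    unfolding f_def using hs by (simp add: sum_subtractf)
  have key: "2 * int (card E) \<le> 3 * int (card V) - 4"
  proof (cases "\<exists>v\<in>V. degree E v = 3")
    case True
    then obtain v where v: "v \<in> V" "degree E v = 3" by blast
    then obtain e1 e2 e3 where es: "{e\<in>E. v \<in> e} = {e1,e2,e3}" "e1 \<noteq> e2" "e2 \<noteq> e3" "e1 \<noteq> e3"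
      unfolding degree_def by (auto simp: card_3_iff)
    have "e1 \<in> E" "v \<in> e1" "e2 \<in> E" "v \<in> e2" "e3 \<in> E" "v \<in> e3" using es(1) by blast+
    then obtain a b c where abc: "a \<noteq> v" "a \<in> V" "e1 = {v,a}" "b \<noteq> v" "b \<in> V" "e2 = {v,b}"
       "c \<noteq> v" "c \<in> V" "e3 = {v,c}"
      using edge_other[OF sg] by metis
    have Ea: "{v,a} \<in> E" "{v,b} \<in> E" "{v,c} \<in> E" using abc \<open>e1 \<in> E\<close> \<open>e2 \<in> E\<close> \<open>e3 \<in> E\<close> by auto
    have dist: "a \<noteq> b" "b \<noteq> c" "a \<noteq> c" using es abc by auto
    have nb3: "degree E x \<noteq> 3" if "x \<in> V" "{v,x} \<in> E" "x \<noteq> v" for x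
    proof
      assume "degree E x = 3"
      have "is_walk E [v,x]" using that unfolding is_walk_def by (auto simp: less_Suc_eq)
      then show False using assms(5) v that \<open>degree E x = 3\<close>
        unfolding trivalent_vertices_far_def by fastforce
    qed
    have deg_pos: "degree E x \<ge> 1" if "{v,x} \<in> E" for x
    proof -
      have "{v,x} \<in> {e\<in>E. x \<in> e}" using that by auto
      then have "{e\<in>E. x \<in> e} \<noteq> {}" by blast
      moreover have "finite {e\<in>E. x \<in> e}" using fE by simp
      ultimately show ?thesis unfolding degree_def by (simp add: Suc_le_eq card_gt_0_iff)
    qed
    have fa1: "f x \<ge> 1" if "x \<in> V" "{v,x} \<in> E" "x \<noteq> v" for x
      using nb3[OF that] le3[OF that(1)] unfolding f_def by simp
    have sub: "\<And>S. S \<subseteq> V \<Longrightarrow> (\<Sum>x\<in>S. f x) \<le> (\<Sum>x\<in>V. f x)"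
      by (rule sum_mono2[OF fV]) (auto intro: fnn)
    have "(\<Sum>x\<in>V. f x) \<ge> 4"
    proof (cases "degree E a \<ge> 2")
      case False
      then have "degree E a = 1" using deg_pos[OF Ea(1)] by simp
      then have "f a = 2" unfolding f_def by simp
      have "(\<Sum>x\<in>{a,b,c}. f x) = f a + f b + f c" using dist by simp
      also have "\<dots> \<ge> 4" using \<open>f a = 2\<close> fa1[of b] fa1[of c] abc Ea by simp
      finally show ?thesis using sub[of "{a,b,c}"] abc by simp
    next
      case True
      have "card {e\<in>E. a \<in> e} \<ge> 2" using True unfolding degree_def by simp
      have "\<not> {e\<in>E. a \<in> e} \<subseteq> {{v,a}}"
      proof (rule notI)
        assume "{e\<in>E. a \<in> e} \<subseteq> {{v,a}}"
        then have "card {e\<in>E. a \<in> e} \<le> card {{v,a}}" by (rule card_mono[rotated]) simp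
        then show False using \<open>card {e\<in>E. a \<in> e} \<ge> 2\<close> by simp
      qed
      then obtain e where e: "e \<in> E" "a \<in> e" "e \<noteq> {v,a}" by blast
      then obtain x where x: "x \<noteq> a" "x \<in> V" "e = {a,x}" using edge_other[OF sg] by metis
      have xv: "x \<noteq> v" using x e by auto
      have xb: "x \<noteq> b"
      proof
        assume "x = b"
        then have "{a,b} \<in> E" using e x by simp
        moreover have "\<not> (v \<noteq> a \<and> a \<noteq> b \<and> v \<noteq> b \<and> {v,a} \<in> E \<and> {a,b} \<in> E \<and> {v,b} \<in> E)"
          using assms(6) v(1) abc unfolding triangle_free_def by blast
        ultimately show False using Ea abc dist by auto
      qed
      have xc: "x \<noteq> c"
      proof
        assume "x = c"
        then have "{a,c} \<in> E" using e x by simp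
        moreover have "\<not> (v \<noteq> a \<and> a \<noteq> c \<and> v \<noteq> c \<and> {v,a} \<in> E \<and> {a,c} \<in> E \<and> {v,c} \<in> E)"
          using assms(6) v(1) abc unfolding triangle_free_def by blast
        ultimately show False using Ea abc dist by auto
      qed
      have "degree E x \<noteq> 3"
      proof
        assume d3: "degree E x = 3"
        have "is_walk E [v,a,x]" using Ea(1) e x unfolding is_walk_def
          by (auto simp: less_Suc_eq nth_Cons split: nat.splits)
        then show False using assms(5) v x xv d3
          unfolding trivalent_vertices_far_def by fastforce
      qed
      then have fx: "f x \<ge> 1" using le3[OF x(2)] unfolding f_def by simp
      have "(\<Sum>y\<in>{a,b,c,x}. f y) = f a + f b + f c + f x" using dist x(1) xb xc by simp
      also have "\<dots> \<ge> 4" using fx fa1[of a] fa1[of b] fa1[of c] abc Ea by simp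
      finally show ?thesis using sub[of "{a,b,c,x}"] abc x by simp
    qed
    then show ?thesis using sumf by simp
  next
    case False
    then have le2: "\<And>v. v \<in> V \<Longrightarrow> degree E v \<le> 2" using le3 by (metis le_antisym not_less_eq_eq numeral_2_eq_2 numeral_3_eq_3)
    show ?thesis
    proof (cases "card V \<ge> 4")
      case True
      have "(\<Sum>v\<in>V. int (degree E v)) \<le> (\<Sum>v\<in>V. 2)" by (rule sum_mono) (simp add: le2)
      then show ?thesis using hs True by simp
    next
      case False
      then have "card V = 2 \<or> card V = 3" using assms(2) by linarith
      then show ?thesis
      proof
        assume "card V = 2"
        then obtain p q where V: "V = {p,q}" "p \<noteq> q" by (auto simp: card_2_iff)
        have "E \<subseteq> {{p,q}}"
        proof
          fix e assume "e \<in> E"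
          then obtain u w where "u \<noteq> w" "u \<in> V" "w \<in> V" "e = {u,w}"
            using sg unfolding simple_graph_def by blast
          then show "e \<in> {{p,q}}" using V by (auto simp: doubleton_eq_iff)
        qed
        then have "card E \<le> card {{p,q}}" by (rule card_mono[rotated]) simp
        then have "card E \<le> 1" by simp
        then show ?thesis using \<open>card V = 2\<close> by simp
      next
        assume "card V = 3"
        then obtain p q r where V: "V = {p,q,r}" "p \<noteq> q" "q \<noteq> r" "p \<noteq> r" by (auto simp: card_3_iff)
        have sE: "E \<subseteq> {{p,q},{q,r},{p,r}}"
        proof
          fix e assume "e \<in> E"
          then obtain u w where "u \<noteq> w" "u \<in> V" "w \<in> V" "e = {u,w}"
            using sg unfolding simple_graph_def by blast
          then show "e \<in> {{p,q},{q,r},{p,r}}" using V by (auto simp: doubleton_eq_iff)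
        qed
        have nall: "\<not> ({p,q} \<in> E \<and> {q,r} \<in> E \<and> {p,r} \<in> E)"
          using assms(6) V unfolding triangle_free_def by blast
        have "card E \<le> 2"
        proof -
          obtain t where "t \<in> {{p,q},{q,r},{p,r}}" "t \<notin> E" using nall by blast
          then have "E \<subseteq> {{p,q},{q,r},{p,r}} - {t}" using sE by blast
          moreover have "card ({{p,q},{q,r},{p,r}} - {t}) \<le> 2"
          proof -
            have "card {{p,q},{q,r},{p,r}} \<le> 3" by (rule card_insert_le_m1) (simp_all add: card_insert_le_m1)
            then show ?thesis using \<open>t \<in> _\<close> by (simp add: card_Diff_singleton)
          qed
          ultimately show ?thesis using card_mono[of "{{p,q},{q,r},{p,r}} - {t}" E] by simp
        qed
        then show ?thesis using \<open>card V = 3\<close> by simp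
      qed
    qed
  qed
  then show ?thesis unfolding graph_genus_def by simp
qed

end
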